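(* Let $\Sigma$ be a finite alphabet. For every unranked ordered $\Sigma$-labeled tree $t$, $|\mathrm{hdag}(t)| \le \min(|\mathrm{dag}(t)|, |\mathrm{bdag}(t)|)$.
   Context: An unranked tree over $\Sigma$ is a finite rooted tree with nodes labeled in $\Sigma$ and linearly ordered children (arbitrary finite number). Size means number of edges. $\mathrm{dag}(t)$ is the minimal dag of $t$: its nodes are the distinct subtrees of $t$, and the node of a subtree $f(s_1,\dots,s_k)$ has $k$ ordered edges to the nodes of $s_1,\dots,s_k$; thus $|\mathrm{dag}(t)|$ equals the sum, over all distinct subtrees $s$ of $t$, of the number of children of the root of $s$. The first-child/next-sibling encoding $\mathrm{fcns}$ maps a sequence of unranked trees to a binary tree (each node has an optional left and optional right child): $\mathrm{fcns}(\varepsilon)$ is empty and $\mathrm{fcns}(t_1t_2\cdots t_n)=f(\mathrm{fcns}(u_1\cdots u_m),\mathrm{fcns}(t_2\cdots t_n))$ when $t_1=f(u_1,\dots,u_m)$ (left child = first child, right child = next sibling). $\mathrm{bdag}(t)$ is the minimal dag of $\mathrm{fcns}(t)$ (identical subtrees merged), and $|\mathrm{bdag}(t)|$ its number of edges (edges to absent children are not counted). Hybrid dag: for each distinct subtree $s=f(s_1,\dots,s_k)$ of $t$ with $k\ge1$ introduce a fresh symbol $A_s$ and the height-one tree $\rho_s=f(\alpha_1,\dots,\alpha_k)$, where $\alpha_i$ is the label of $s_i$ if $s_i$ is a single node and $\alpha_i=A_{s_i}$ otherwise (the $\alpha_i$ are leaves). Let $\rho'_s$ be $\rho_s$ with its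 root additionally marked by $A_s$. Then $\mathrm{hdag}(t)$ is the minimal dag of the forest consisting of the binary trees $\mathrm{fcns}(\rho'_s)$ (identical subtrees anywhere in the forest are merged), and $|\mathrm{hdag}(t)|$ is its number of edges (edges to absent children not counted). *)

theory Defs
  imports Main
begin

datatype 'a utree = UNode 'a "'a utree list"

text \<open>Binary trees with optional children: BLeaf = absent child.\<close>
datatype 'a btree = BLeaf | BNode 'a "'a btree" "'a btree"

fun usubtrees :: "'a utree \<Rightarrow> 'a utree set" where
  "usubtrees (UNode f ts) = insert (UNode f ts) (\<Union>s\<in>set ts. usubtrees s)"

fun nchildren :: "'a utree \<Rightarrow> nat" where
  "nchildren (UNode f ts) = length ts"

text \<open>Size (number of edges) of the minimal dag.\<close>
definition dag_size :: "'a utree \<Rightarrow> nat" where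
  "dag_size t = (\<Sum>s\<in>usubtrees t. nchildren s)"

text \<open>First-child/next-sibling encoding of a sequence of trees.\<close>
fun fcns :: "'a utree list \<Rightarrow> 'a btree" where
  "fcns [] = BLeaf"
| "fcns (UNode f us # ts) = BNode f (fcns us) (fcns ts)"

fun bsubtrees :: "'a btree \<Rightarrow> 'a btree set" where
  "bsubtrees BLeaf = {}"
| "bsubtrees (BNode a l r) = insert (BNode a l r) (bsubtrees l \<union> bsubtrees r)"

fun bedges :: "'a btree \<Rightarrow> nat" where
  "bedges BLeaf = 0"
| "bedges (BNode a l r) = (if l = BLeaf then 0 else 1) + (if r = BLeaf then 0 else 1)"

text \<open>Number of edges of the minimal dag of a forest (set) of binary trees.\<close>
definition bforest_dag_size :: "'a btree set \<Rightarrow> nat" where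
  "bforest_dag_size F = (\<Sum>s\<in>(\<Union>b\<in>F. bsubtrees b). bedges s)"

definition bdag_size :: "'a utree \<Rightarrow> nat" where
  "bdag_size t = bforest_dag_size {fcns [t]}"

text \<open>Labels for the hybrid dag: original symbols, fresh nonterminals A_s
  (identified by the subtree s), and root labels f marked with A_s.\<close>
datatype 'a hlabel = Sym 'a | Nt "'a utree" | Root 'a "'a utree"

fun alpha :: "'a utree \<Rightarrow> 'a hlabel utree" where
  "alpha (UNode g us) = (if us = [] then UNode (Sym g) [] else UNode (Nt (UNode g us)) [])"

fun rho' :: "'a utree \<Rightarrow> 'a hlabel utree" where
  "rho' (UNode f ss) = UNode (Root f (UNode f ss)) (map alpha ss)"

definition hdag_size :: "'a utree \<Rightarrow> nat" where
  "hdag_size t = bforest_dag_size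
     ((\<lambda>s. fcns [rho' s]) ` {s \<in> usubtrees t. nchildren s \<ge> 1})"

end

theory Submission
  imports Defs
begin

lemma sum_Un_le_nat:
  fixes f :: "'b \<Rightarrow> nat"
  assumes "finite A" "finite B"
  shows "sum f (A \<union> B) \<le> sum f A + sum f B"
  using sum.union_inter[OF assms, of f] by linarith

lemma sum_UN_le_nat:
  fixes f :: "'b \<Rightarrow> nat"
  assumes "finite I" "\<And>i. i \<in> I \<Longrightarrow> finite (A i)"
  shows "sum f (\<Union>i\<in>I. A i) \<le> (\<Sum>i\<in>I. sum f (A i))"
  using assms
proof (induction I rule: finite_induct)
  case empty then show ?case by simp
next
  case (insert x F)
  have "sum f (\<Union>i\<in>insert x F. A i) = sum f (A x \<union> (\<Union>i\<in>F. A i))" by simp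
  also have "\<dots> \<le> sum f (A x) + sum f (\<Union>i\<in>F. A i)"
    by (rule sum_Un_le_nat) (use insert in auto)
  also have "\<dots> \<le> sum f (A x) + (\<Sum>i\<in>F. sum f (A i))" using insert by auto
  finally show ?case using insert by simp
qed

fun children :: "'a utree \<Rightarrow> 'a utree list" where
  "children (UNode f ts) = ts"

fun lft :: "'a btree \<Rightarrow> nat" where
  "lft BLeaf = 0"
| "lft (BNode a l r) = (if l = BLeaf then 0 else 1)"

fun rgt :: "'a btree \<Rightarrow> nat" where
  "rgt BLeaf = 0"
| "rgt (BNode a l r) = (if r = BLeaf then 0 else 1)"

lemma bedges_split: "bedges b = lft b + rgt b"
  by (cases b) auto

lemma finite_usubtrees: "finite (usubtrees t)"
  by (induction t) auto

lemma finite_bsubtrees: "finite (bsubtrees b)"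
  by (induction b) auto

lemma fcns_BLeaf_iff: "fcns xs = BLeaf \<longleftrightarrow> xs = []"
  by (cases xs rule: fcns.cases) auto

lemma fcns_inj: "fcns xs = fcns ys \<Longrightarrow> xs = ys"
proof (induction xs arbitrary: ys rule: fcns.induct)
  case 1 then show ?case using fcns_BLeaf_iff[of ys] by simp
next
  case (2 f us ts)
  then show ?case
    by (cases ys rule: fcns.cases) auto
qed

lemma drop_in_bsub: "i < length us \<Longrightarrow> fcns (drop i us) \<in> bsubtrees (fcns us)"
proof (induction us arbitrary: i)
  case Nil then show ?case by simp
next
  case (Cons u us)
  obtain f vs where u: "u = UNode f vs" by (cases u)
  show ?case
  proof (cases i)
    case 0 then show ?thesis using u by simp
  next
    case (Suc j) then show ?thesis using Cons u by auto
  qed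
qed

lemma drop_bsub_sub: "bsubtrees (fcns (drop i us)) \<subseteq> bsubtrees (fcns us)"
proof (induction us arbitrary: i)
  case Nil then show ?case by simp
next
  case (Cons u us)
  obtain f vs where u: "u = UNode f vs" by (cases u)
  show ?case
  proof (cases i)
    case 0 then show ?thesis using u by simp
  next
    case (Suc j) then show ?thesis using Cons[of j] u by auto
  qed
qed

lemma member_bsub:
  assumes "u \<in> set us"
  shows "bsubtrees (fcns (children u)) \<subseteq> bsubtrees (fcns us)
     \<and> (\<exists>L. fcns (u # L) \<in> bsubtrees (fcns us))"
proof -
  obtain pre L where us: "us = pre @ u # L" using split_list[OF assms] by blast
  have d: "drop (length pre) us = u # L" using us by simp
  have sub: "bsubtrees (fcns (u # L)) \<subseteq> bsubtrees (fcns us)"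
    using drop_bsub_sub[of "length pre" us] d by simp
  obtain f vs where u: "u = UNode f vs" by (cases u)
  have "bsubtrees (fcns (children u)) \<subseteq> bsubtrees (fcns (u # L))" using u by auto
  moreover have "fcns (u # L) \<in> bsubtrees (fcns (u # L))" using u by simp
  ultimately show ?thesis using sub by blast
qed

lemma usub_children_bsub:
  "p \<in> usubtrees t \<Longrightarrow> bsubtrees (fcns (children p)) \<subseteq> bsubtrees (fcns (children t))"
proof (induction t)
  case (UNode f ts)
  show ?case
  proof (cases "p = UNode f ts")
    case True then show ?thesis by simp
  next
    case False
    then obtain c where c: "c \<in> set ts" "p \<in> usubtrees c" using UNode.prems by auto
    have "bsubtrees (fcns (children p)) \<subseteq> bsubtrees (fcns (children c))"
      using UNode.IH c by blast
    also have "\<dots> \<subseteq> bsubtrees (fcns ts)" using member_bsub[OF c(1)] by blast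
    finally show ?thesis by simp
  qed
qed

lemma usub_head_bsub:
  "p \<in> usubtrees t \<Longrightarrow> p \<noteq> t \<Longrightarrow> \<exists>L. fcns (p # L) \<in> bsubtrees (fcns (children t))"
proof (induction t)
  case (UNode f ts)
  then obtain c where c: "c \<in> set ts" "p \<in> usubtrees c" by auto
  show ?case
  proof (cases "p = c")
    case True then show ?thesis using member_bsub[OF c(1)] by simp
  next
    case False
    then obtain L where "fcns (p # L) \<in> bsubtrees (fcns (children c))"
      using UNode.IH c by blast
    then show ?thesis using member_bsub[OF c(1)] by auto
  qed
qed

lemma bsub_top: "bsubtrees (fcns [t]) = insert (fcns [t]) (bsubtrees (fcns (children t)))"
  by (cases t) auto

lemma usub_head_B:
  assumes "p \<in> usubtrees t"
  shows "\<exists>L. fcns (p # L) \<in> bsubtrees (fcns [t])"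
proof (cases "p = t")
  case True then show ?thesis by (intro exI[of _ "[]"]) (simp add: bsub_top)
next
  case False then show ?thesis using usub_head_bsub[OF assms] bsub_top[of t] by blast
qed

lemma usub_drop_B:
  assumes "p \<in> usubtrees t" "i < length (children p)"
  shows "fcns (drop i (children p)) \<in> bsubtrees (fcns [t])"
  using drop_in_bsub[OF assms(2)] usub_children_bsub[OF assms(1)] bsub_top[of t] by blast

lemma alpha_fcns: "fcns (alpha u # L) = BNode (case u of UNode g us \<Rightarrow> if us = [] then Sym g else Nt u) BLeaf (fcns L)"
  by (cases u) auto

lemma chain_bsub:
  "bsubtrees (fcns (map alpha L)) = (\<lambda>i. fcns (map alpha (drop i L))) ` {i. i < length L}"
proof (induction L)
  case Nil then show ?case by simp
next
  case (Cons u L)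
  have "bsubtrees (fcns (map alpha (u # L))) = insert (fcns (map alpha (u#L))) (bsubtrees (fcns (map alpha L)))"
    by (simp add: alpha_fcns)
  also have "\<dots> = (\<lambda>i. fcns (map alpha (drop i (u#L)))) ` {i. i < length (u#L)}"
    unfolding Cons.IH
  proof -
    have "{i. i < length (u # L)} = insert 0 (Suc ` {i. i < length L})"
      by (auto simp: image_iff less_Suc_eq_0_disj)
    then show "insert (fcns (map alpha (u # L))) ((\<lambda>i. fcns (map alpha (drop i L))) ` {i. i < length L}) =
      (\<lambda>i. fcns (map alpha (drop i (u # L)))) ` {i. i < length (u # L)}"
      by (simp add: image_image)
  qed
  finally show ?case .
qed

lemma bedges_chain: "bedges (fcns (map alpha L)) = (if length L \<ge> 2 then 1 else 0)"
  by (cases L) (auto simp: alpha_fcns fcns_BLeaf_iff Suc_le_eq)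

lemma bsub_size: "b \<in> bsubtrees c \<Longrightarrow> size b \<le> size c"
  by (induction c) auto

lemma chain_sum: "(\<Sum>b\<in>bsubtrees (fcns (map alpha L)). bedges b) = length L - 1"
proof (induction L)
  case Nil then show ?case by simp
next
  case (Cons u L)
  have eq: "bsubtrees (fcns (map alpha (u # L))) = insert (fcns (map alpha (u#L))) (bsubtrees (fcns (map alpha L)))"
    by (simp add: alpha_fcns)
  have nin: "fcns (map alpha (u#L)) \<notin> bsubtrees (fcns (map alpha L))"
  proof
    assume "fcns (map alpha (u#L)) \<in> bsubtrees (fcns (map alpha L))"
    from bsub_size[OF this] show False by (simp add: alpha_fcns)
  qed
  show ?case unfolding eq using nin Cons.IH
    by (simp add: finite_bsubtrees bedges_chain del: list.map) (cases L, auto simp: Suc_le_eq intro: Suc_leI)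
qed

lemma rho_top: "fcns [rho' s] = BNode (Root (case s of UNode f ss \<Rightarrow> f) s) (fcns (map alpha (children s))) BLeaf"
  by (cases s) auto

lemma bsub_rho: "bsubtrees (fcns [rho' s]) = insert (fcns [rho' s]) (bsubtrees (fcns (map alpha (children s))))"
  by (cases s) auto

lemma bedges_rho_le: "bedges (fcns [rho' s]) \<le> 1"
  by (simp add: rho_top)

theorem theorem1:
  fixes t :: "'a::finite utree"
  shows "hdag_size t \<le> min (dag_size t) (bdag_size t)"
proof -
  define S where "S = {s \<in> usubtrees t. nchildren s \<ge> 1}"
  define R where "R = (\<lambda>s. fcns [rho' s]) ` S"
  define Ch where "Ch = (\<Union>s\<in>S. bsubtrees (fcns (map alpha (children s))))"
  have finS: "finite S" unfolding S_def using finite_usubtrees[of t] by auto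
  have finR: "finite R" unfolding R_def using finS by auto
  have finCh: "finite Ch" unfolding Ch_def using finS finite_bsubtrees by auto
  have H: "hdag_size t = sum bedges (R \<union> Ch)"
    unfolding hdag_size_def bforest_dag_size_def R_def Ch_def S_def[symmetric]
    by (rule arg_cong[where f="sum bedges"]) (auto simp: bsub_rho)
  have hle: "hdag_size t \<le> sum bedges R + sum bedges Ch"
    unfolding H by (rule sum_Un_le_nat[OF finR finCh])
  have Rle: "sum bedges R \<le> card S"
  proof -
    have "sum bedges R \<le> card R * 1"
      using sum_bounded_above[of R bedges 1] bedges_rho_le unfolding R_def by auto
    also have "\<dots> \<le> card S" unfolding R_def using card_image_le[OF finS] by simp
    finally show ?thesis .
  qed
  have "sum bedges Ch \<le> (\<Sum>s\<in>S. sum bedges (bsubtrees (fcns (map alpha (children s)))))"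
    unfolding Ch_def by (rule sum_UN_le_nat[OF finS finite_bsubtrees])
  also have "\<dots> = (\<Sum>s\<in>S. nchildren s - 1)"
    by (rule sum.cong) (auto simp: chain_sum, metis children.simps nchildren.simps utree.exhaust)
  finally have Chd: "sum bedges Ch \<le> (\<Sum>s\<in>S. nchildren s - 1)" .
  have "card S + (\<Sum>s\<in>S. nchildren s - 1) = (\<Sum>s\<in>S. nchildren s)"
  proof -
    have "card S + (\<Sum>s\<in>S. nchildren s - 1) = (\<Sum>s\<in>S. 1 + (nchildren s - 1))"
      by (simp only: sum.distrib) simp
    also have "\<dots> = (\<Sum>s\<in>S. nchildren s)" by (rule sum.cong) (auto simp: S_def)
    finally show ?thesis .
  qed
  also have "\<dots> \<le> dag_size t" unfolding dag_size_def S_def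
    by (rule sum_mono2[OF finite_usubtrees]) auto
  finally have D: "hdag_size t \<le> dag_size t" using hle Rle Chd by linarith
  define B where "B = bsubtrees (fcns [t])"
  have finB: "finite B" unfolding B_def by (rule finite_bsubtrees)
  have bd: "bdag_size t = sum lft B + sum rgt B"
    unfolding bdag_size_def bforest_dag_size_def B_def
    by (simp add: bedges_split sum.distrib)
  define h where "h = (\<lambda>s. fcns (s # (SOME L. fcns (s # L) \<in> B)))"
  have hB: "h s \<in> B" if "s \<in> S" for s
  proof -
    have "\<exists>L. fcns (s # L) \<in> B" using usub_head_B that unfolding S_def B_def by blast
    then show ?thesis unfolding h_def by (rule someI_ex)
  qed
  have hinj: "inj_on h S"
    by (rule inj_onI) (auto simp: h_def dest: fcns_inj)
  have hl: "lft (h s) = 1" if "s \<in> S" for s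
    using that unfolding S_def h_def
    by (cases s) (auto simp: fcns_BLeaf_iff)
  have L1: "card S \<le> sum lft B"
  proof -
    have "card S = card (h ` S)" using card_image[OF hinj] by simp
    also have "\<dots> = sum (\<lambda>_. 1) (h ` S)" by simp
    also have "\<dots> = sum lft (h ` S)" by (rule sum.cong) (auto simp: hl)
    also have "\<dots> \<le> sum lft B" by (rule sum_mono2[OF finB]) (use hB in auto)
    finally show ?thesis .
  qed
  define C where "C = {L. length L \<ge> 2 \<and> (\<exists>p\<in>usubtrees t. \<exists>i<length (children p). L = drop i (children p))}"
  have finC: "finite C"
  proof (rule finite_subset)
    show "C \<subseteq> (\<Union>p\<in>usubtrees t. (\<lambda>i. drop i (children p)) ` {..<length (children p)})"
      unfolding C_def by auto
  qed (auto simp: finite_usubtrees)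
  have L2: "card C \<le> sum rgt B"
  proof -
    have "card C = card (fcns ` C)"
      by (rule card_image[symmetric]) (auto intro: inj_onI dest: fcns_inj)
    also have "\<dots> = sum rgt (fcns ` C)"
    proof -
      have "rgt (fcns L) = 1" if "L \<in> C" for L
        using that unfolding C_def
        by (cases L rule: fcns.cases) (auto simp: fcns_BLeaf_iff)
      then have "sum rgt (fcns ` C) = sum (\<lambda>_. 1) (fcns ` C)" by (intro sum.cong) auto
      then show ?thesis by simp
    qed
    also have "\<dots> \<le> sum rgt B"
      by (rule sum_mono2[OF finB]) (auto simp: C_def B_def intro: usub_drop_B)
    finally show ?thesis .
  qed
  define Y where "Y = (\<lambda>L. fcns (map alpha L)) ` C"
  have Chb: "sum bedges Ch \<le> card C"
  proof -
    have "sum bedges Ch = sum bedges (Ch \<inter> Y)"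
    proof (rule sum.mono_neutral_right[OF finCh])
      show "\<forall>c\<in>Ch - Ch \<inter> Y. bedges c = 0"
      proof
        fix c assume c: "c \<in> Ch - Ch \<inter> Y"
        then obtain s i where s: "s \<in> S" "i < length (children s)"
          and ce: "c = fcns (map alpha (drop i (children s)))"
          unfolding Ch_def by (auto simp: chain_bsub)
        show "bedges c = 0"
        proof (rule ccontr)
          assume "bedges c \<noteq> 0"
          then have "length (drop i (children s)) \<ge> 2"
            using ce bedges_chain[of "drop i (children s)"] by (simp split: if_splits)
          then have "drop i (children s) \<in> C" using s unfolding C_def S_def by auto
          then show False using c ce unfolding Y_def by (auto simp: drop_map)
        qed
      qed
    qed auto
    also have "\<dots> \<le> of_nat (card (Ch \<inter> Y)) * 1"
    proof (rule sum_bounded_above)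
      fix c assume "c \<in> Ch \<inter> Y"
      then obtain L where "c = fcns (map alpha L)" unfolding Y_def by auto
      then show "bedges c \<le> 1" by (simp add: bedges_chain)
    qed
    also have "\<dots> \<le> card Y" using finC unfolding Y_def by (simp add: card_mono)
    also have "\<dots> \<le> card C" unfolding Y_def by (rule card_image_le[OF finC])
    finally show ?thesis .
  qed
  have Bd: "hdag_size t \<le> bdag_size t" using hle Rle Chb L1 L2 bd by linarith
  show ?thesis using D Bd by simp
qed

end
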